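(* Let $(E,\|\cdot\|)$ be a real Banach space, $I=[a,b]$ a closed real interval, $E_0=C(I,E)$ the space of continuous functions $\varphi:I\to E$ with the supremum norm $\|\varphi\|_0=\sup\{\|\varphi(t)\|: t\in I\}$, fix $c\in I$, and let $\mathcal{R}_c=\{\varphi\in E_0: \|\varphi\|_0=\|\varphi(c)\|\}$. The following are equivalent: (a) $\mathcal{R}_c$ is algebraically closed, i.e. $\varphi,\xi\in\mathcal{R}_c$ implies $\varphi-\xi\in\mathcal{R}_c$; (b) $\mathcal{R}_c$ is additive, i.e. $\varphi,\psi\in\mathcal{R}_c$ implies $\varphi+\psi\in\mathcal{R}_c$; (c) $\mathcal{R}_c$ is a linear subspace of $E_0$. *)

theory Defs
  imports "HOL-Analysis.Analysis"
begin

definition E0 :: "real \<Rightarrow> real \<Rightarrow> (real \<Rightarrow> 'e::real_normed_vector) set" where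
  "E0 a b = {f. continuous_on {a..b} f}"

definition norm0 :: "real \<Rightarrow> real \<Rightarrow> (real \<Rightarrow> 'e::real_normed_vector) \<Rightarrow> real" where
  "norm0 a b f = (SUP t\<in>{a..b}. norm (f t))"

definition Rc :: "real \<Rightarrow> real \<Rightarrow> real \<Rightarrow> (real \<Rightarrow> 'e::real_normed_vector) set" where
  "Rc a b c = {f \<in> E0 a b. norm0 a b f = norm (f c)}"

definition fun_subspace :: "('x \<Rightarrow> 'e::real_vector) set \<Rightarrow> bool" where
  "fun_subspace S \<longleftrightarrow> (\<lambda>t. 0) \<in> S
     \<and> (\<forall>f\<in>S. \<forall>g\<in>S. (\<lambda>t. f t + g t) \<in> S)
     \<and> (\<forall>r::real. \<forall>f\<in>S. (\<lambda>t. r *\<^sub>R f t) \<in> S)"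

end

theory Submission
  imports Defs
begin

lemma Rc_iff:
  fixes f :: "real \<Rightarrow> 'e::real_normed_vector"
  assumes c: "c \<in> {a..b}"
  shows "f \<in> Rc a b c \<longleftrightarrow> continuous_on {a..b} f \<and> (\<forall>t\<in>{a..b}. norm (f t) \<le> norm (f c))"
proof (cases "continuous_on {a..b} f")
  case True
  have "compact ((\<lambda>t. norm (f t)) ` {a..b})"
    by (intro compact_continuous_image continuous_on_norm True) simp
  hence bdd: "bdd_above ((\<lambda>t. norm (f t)) ` {a..b})"
    by (simp add: bounded_imp_bdd_above compact_imp_bounded)
  have ne: "{a..b} \<noteq> {}" using c by auto
  show ?thesis
  proof
    assume "f \<in> Rc a b c"
    hence eq: "(SUP t\<in>{a..b}. norm (f t)) = norm (f c)"
      by (simp add: Rc_def norm0_def)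
    show "continuous_on {a..b} f \<and> (\<forall>t\<in>{a..b}. norm (f t) \<le> norm (f c))"
      using True cSUP_upper[OF _ bdd] eq by metis
  next
    assume h: "continuous_on {a..b} f \<and> (\<forall>t\<in>{a..b}. norm (f t) \<le> norm (f c))"
    have "(SUP t\<in>{a..b}. norm (f t)) = norm (f c)"
      by (rule antisym, rule cSUP_least[OF ne], use h in auto, rule cSUP_upper[OF c bdd])
    thus "f \<in> Rc a b c" using True by (simp add: Rc_def norm0_def E0_def)
  qed
next
  case False
  thus ?thesis by (simp add: Rc_def E0_def)
qed

theorem lemma2:
  fixes a b c :: real
  assumes "c \<in> {a..b}"
  defines "R \<equiv> (Rc a b c :: (real \<Rightarrow> 'e::banach) set)"
  shows "((\<forall>\<phi>\<in>R. \<forall>\<xi>\<in>R. (\<lambda>t. \<phi> t - \<xi> t) \<in> R)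
           \<longleftrightarrow> (\<forall>\<phi>\<in>R. \<forall>\<psi>\<in>R. (\<lambda>t. \<phi> t + \<psi> t) \<in> R))
       \<and> ((\<forall>\<phi>\<in>R. \<forall>\<psi>\<in>R. (\<lambda>t. \<phi> t + \<psi> t) \<in> R)
           \<longleftrightarrow> fun_subspace R)"
proof (cases "a = b \<or> (\<forall>v::'e. v = 0)")
  case True
  have all: "f \<in> R \<longleftrightarrow> continuous_on {a..b} f" for f :: "real \<Rightarrow> 'e"
  proof -
    have "\<forall>t\<in>{a..b}. norm (f t) \<le> norm (f c)"
    proof
      fix t assume t: "t \<in> {a..b}"
      show "norm (f t) \<le> norm (f c)"
      proof (cases "a = b")
        case True thus ?thesis using t assms(1) by auto
      next
        case False hence "\<forall>v::'e. v = 0" using \<open>a = b \<or> (\<forall>v::'e. v = 0)\<close> by auto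
        hence "f t = 0" "f c = 0" by blast+
        thus ?thesis by simp
      qed
    qed
    thus ?thesis unfolding R_def using Rc_iff[OF assms(1)] by blast
  qed
  have RR: "R = {f. continuous_on {a..b} f}" using all by blast
  show ?thesis unfolding fun_subspace_def RR
    by (auto intro!: continuous_on_add continuous_on_diff continuous_on_scaleR continuous_on_const)
next
  case False
  then obtain v :: 'e where v: "v \<noteq> 0" and ab: "a < b" using assms(1) by force
  define t0 where "t0 = (if c = a then b else a)"
  have t0: "t0 \<in> {a..b}" "t0 \<noteq> c" using ab assms(1) by (auto simp: t0_def)
  define g where "g t = 1 - \<bar>t - c\<bar> / (b - a)" for t
  have gc: "g c = 1" by (simp add: g_def)
  have grange: "0 \<le> g t \<and> g t \<le> 1" if "t \<in> {a..b}" for t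
    using that assms(1) ab by (auto simp: g_def field_simps abs_le_iff)
  have gt0: "g t0 < 1" using t0 ab by (simp add: g_def)
  have gcont: "continuous_on {a..b} g" unfolding g_def using ab by (intro continuous_intros) auto
  have phi: "(\<lambda>t. v) \<in> R" unfolding R_def Rc_iff[OF assms(1)] by (auto intro: continuous_on_const)
  have gle: "\<forall>t\<in>{a..b}. \<bar>g t\<bar> * norm v \<le> norm v"
  proof
    fix t assume "t \<in> {a..b}"
    hence "\<bar>g t\<bar> \<le> 1" using grange by auto
    thus "\<bar>g t\<bar> * norm v \<le> norm v" by (simp add: mult_left_le_one_le)
  qed
  have xi: "(\<lambda>t. g t *\<^sub>R v) \<in> R" unfolding R_def Rc_iff[OF assms(1)]
    using gle gc gcont by (simp add: continuous_on_scaleR continuous_on_const)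
  have psi: "(\<lambda>t. - (g t *\<^sub>R v)) \<in> R" unfolding R_def Rc_iff[OF assms(1)]
    using gle gc gcont by (simp add: continuous_on_scaleR continuous_on_const continuous_on_minus)
  have bad: "(\<lambda>t. v + - (g t *\<^sub>R v)) \<notin> R"
  proof
    assume "(\<lambda>t. v + - (g t *\<^sub>R v)) \<in> R"
    hence "norm (v + - (g t0 *\<^sub>R v)) \<le> norm (v + - (g c *\<^sub>R v))"
      unfolding R_def Rc_iff[OF assms(1)] using t0 by blast
    moreover have "v + - (g t0 *\<^sub>R v) = (1 - g t0) *\<^sub>R v" by (simp add: algebra_simps)
    moreover have "(1 - g t0) *\<^sub>R v \<noteq> 0" using gt0 v by simp
    ultimately show False using gc by simp
  qed
  have na: "\<not> (\<forall>\<phi>\<in>R. \<forall>\<xi>\<in>R. (\<lambda>t. \<phi> t - \<xi> t) \<in> R)"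
  proof
    assume h: "\<forall>\<phi>\<in>R. \<forall>\<xi>\<in>R. (\<lambda>t. \<phi> t - \<xi> t) \<in> R"
    have "(\<lambda>t. v - g t *\<^sub>R v) = (\<lambda>t. v + - (g t *\<^sub>R v))" by simp
    moreover have "(\<lambda>t. v - g t *\<^sub>R v) \<in> R" using bspec[OF bspec[OF h phi] xi] by simp
    ultimately show False using bad by simp
  qed
  have nb: "\<not> (\<forall>\<phi>\<in>R. \<forall>\<psi>\<in>R. (\<lambda>t. \<phi> t + \<psi> t) \<in> R)"
  proof
    assume h: "\<forall>\<phi>\<in>R. \<forall>\<psi>\<in>R. (\<lambda>t. \<phi> t + \<psi> t) \<in> R"
    show False using bspec[OF bspec[OF h phi] psi] bad by simp
  qed
  show ?thesis using na nb unfolding fun_subspace_def by blast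
qed

end
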